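(* There exists a sequence of series-parallel weighted graphs $\{W_n\}_{n=1}^\infty$ such that (1) for each $n$ the underlying unweighted graph of $W_n$ contains the diamond $D_n$ as a subgraph, and (2) there exist $C<\infty$ and maps $f_n:V(W_n)\to\ell_2$ such that each $f_n$ is a bilipschitz embedding of $V(W_n)$ (with its weighted shortest path metric) with distortion at most $C$.
   Context: A weighted graph (positive edge weights) is series-parallel if it can be obtained as follows: start with an edge; in each step add a new vertex and join it to both end vertices of an already existing edge; at the end remove an arbitrary set of edges. A weighted graph is considered as the metric space on its vertices with the weighted shortest path distance. Diamonds: $D_0$ is an edge; $D_i$ is obtained from $D_{i-1}$ by replacing each edge $uv$ by a quadrilateral $u,a,v,b$. The distortion of a bilipschitz map $f$ is $\mathrm{Lip}(f)\cdot\mathrm{Lip}(f^{-1})$. *)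

theory Defs
  imports Complex_Main
begin

definition wgraph :: "'v set \<Rightarrow> 'v set set \<Rightarrow> ('v set \<Rightarrow> real) \<Rightarrow> bool" where
  "wgraph V E w \<longleftrightarrow> finite V \<and>
     (\<forall>e\<in>E. \<exists>u v. e = {u, v} \<and> u \<in> V \<and> v \<in> V \<and> u \<noteq> v) \<and>
     (\<forall>e\<in>E. w e > 0)"

definition walk :: "'v set set \<Rightarrow> 'v \<Rightarrow> 'v \<Rightarrow> 'v list \<Rightarrow> bool" where
  "walk E u v xs \<longleftrightarrow> xs \<noteq> [] \<and> hd xs = u \<and> last xs = v \<and>
     (\<forall>i < length xs - 1. {xs ! i, xs ! Suc i} \<in> E)"

definition walk_len :: "('v set \<Rightarrow> real) \<Rightarrow> 'v list \<Rightarrow> real" where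
  "walk_len w xs = (\<Sum>i < length xs - 1. w {xs ! i, xs ! Suc i})"

definition connected_graph :: "'v set \<Rightarrow> 'v set set \<Rightarrow> bool" where
  "connected_graph V E \<longleftrightarrow> (\<forall>u\<in>V. \<forall>v\<in>V. \<exists>xs. walk E u v xs)"

definition spdist :: "'v set set \<Rightarrow> ('v set \<Rightarrow> real) \<Rightarrow> 'v \<Rightarrow> 'v \<Rightarrow> real" where
  "spdist E w u v = Inf {walk_len w xs | xs. walk E u v xs}"

inductive sp_full :: "'v set \<Rightarrow> 'v set set \<Rightarrow> bool" where
  base: "a \<noteq> b \<Longrightarrow> sp_full {a, b} {{a, b}}"
| step: "sp_full V E \<Longrightarrow> {u, v} \<in> E \<Longrightarrow> x \<notin> V \<Longrightarrow>
          sp_full (insert x V) (E \<union> {{x, u}, {x, v}})"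

definition series_parallel :: "'v set \<Rightarrow> 'v set set \<Rightarrow> ('v set \<Rightarrow> real) \<Rightarrow> bool" where
  "series_parallel V E w \<longleftrightarrow> wgraph V E w \<and> (\<exists>E'. sp_full V E' \<and> E \<subseteq> E')"

inductive is_diamond :: "nat \<Rightarrow> 'v set \<Rightarrow> 'v set set \<Rightarrow> bool" where
  zero: "a \<noteq> b \<Longrightarrow> is_diamond 0 {a, b} {{a, b}}"
| suc: "is_diamond n V E \<Longrightarrow> inj_on p E \<Longrightarrow> inj_on q E \<Longrightarrow>
        p ` E \<inter> V = {} \<Longrightarrow> q ` E \<inter> V = {} \<Longrightarrow> p ` E \<inter> q ` E = {} \<Longrightarrow>
        is_diamond (Suc n) (V \<union> p ` E \<union> q ` E)
          (\<Union>e\<in>E. {{x, p e} | x. x \<in> e} \<union> {{x, q e} | x. x \<in> e})"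

definition contains_diamond :: "nat \<Rightarrow> 'v set \<Rightarrow> 'v set set \<Rightarrow> bool" where
  "contains_diamond n V E \<longleftrightarrow> (\<exists>V' E'. is_diamond n V' E' \<and> V' \<subseteq> V \<and> E' \<subseteq> E)"

definition ell2 :: "(nat \<Rightarrow> real) set" where
  "ell2 = {x. summable (\<lambda>i. (x i)\<^sup>2)}"

definition ell2_dist :: "(nat \<Rightarrow> real) \<Rightarrow> (nat \<Rightarrow> real) \<Rightarrow> real" where
  "ell2_dist x y = sqrt (\<Sum>i. (x i - y i)\<^sup>2)"

definition lip_set :: "('a \<Rightarrow> 'a \<Rightarrow> real) \<Rightarrow> 'a set \<Rightarrow> ('b \<Rightarrow> 'b \<Rightarrow> real) \<Rightarrow> ('a \<Rightarrow> 'b) \<Rightarrow> real set" where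
  "lip_set d X d' f = {d' (f x) (f y) / d x y | x y. x \<in> X \<and> y \<in> X \<and> x \<noteq> y}"

definition lipinv_set :: "('a \<Rightarrow> 'a \<Rightarrow> real) \<Rightarrow> 'a set \<Rightarrow> ('b \<Rightarrow> 'b \<Rightarrow> real) \<Rightarrow> ('a \<Rightarrow> 'b) \<Rightarrow> real set" where
  "lipinv_set d X d' f = {d x y / d' (f x) (f y) | x y. x \<in> X \<and> y \<in> X \<and> x \<noteq> y}"

definition Lip :: "('a \<Rightarrow> 'a \<Rightarrow> real) \<Rightarrow> 'a set \<Rightarrow> ('b \<Rightarrow> 'b \<Rightarrow> real) \<Rightarrow> ('a \<Rightarrow> 'b) \<Rightarrow> real" where
  "Lip d X d' f = Sup (lip_set d X d' f)"

definition Lip_inv :: "('a \<Rightarrow> 'a \<Rightarrow> real) \<Rightarrow> 'a set \<Rightarrow> ('b \<Rightarrow> 'b \<Rightarrow> real) \<Rightarrow> ('a \<Rightarrow> 'b) \<Rightarrow> real" where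
  "Lip_inv d X d' f = Sup (lipinv_set d X d' f)"

definition bilipschitz :: "('a \<Rightarrow> 'a \<Rightarrow> real) \<Rightarrow> 'a set \<Rightarrow> ('b \<Rightarrow> 'b \<Rightarrow> real) \<Rightarrow> ('a \<Rightarrow> 'b) \<Rightarrow> bool" where
  "bilipschitz d X d' f \<longleftrightarrow> inj_on f X \<and> bdd_above (lip_set d X d' f) \<and> bdd_above (lipinv_set d X d' f)"

definition distortion :: "('a \<Rightarrow> 'a \<Rightarrow> real) \<Rightarrow> 'a set \<Rightarrow> ('b \<Rightarrow> 'b \<Rightarrow> real) \<Rightarrow> ('a \<Rightarrow> 'b) \<Rightarrow> real" where
  "distortion d X d' f = Lip d X d' f * Lip_inv d X d' f"

end

theory Submission imports Defs "HOL-Library.Nat_Bijection" begin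

definition lev :: "nat \<Rightarrow> nat" where "lev v = fst (prod_decode v)"
definition par :: "nat \<Rightarrow> nat" where
  "par v = fst (prod_decode (fst (prod_decode (snd (prod_decode v)))))"
definition newP :: "nat \<Rightarrow> nat set \<Rightarrow> nat" where
  "newP m e = prod_encode (Suc m, prod_encode (prod_encode (Min e, Max e), 0))"
definition newQ :: "nat \<Rightarrow> nat set \<Rightarrow> nat" where
  "newQ m e = prod_encode (Suc m, prod_encode (prod_encode (Min e, Max e), 1))"
definition vs :: nat where "vs = prod_encode (0,0)"
definition vt :: nat where "vt = prod_encode (0,1)"

lemma lev_P[simp]: "lev (newP m e) = Suc m" and lev_Q[simp]: "lev (newQ m e) = Suc m"
  and par_P[simp]: "par (newP m e) = Min e" and par_Q[simp]: "par (newQ m e) = Min e"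
  and lev_s[simp]: "lev vs = 0" and lev_t[simp]: "lev vt = 0" and vs_vt[simp]: "vs \<noteq> vt"
  by (simp_all add: lev_def par_def newP_def newQ_def vs_def vt_def)

lemma P_neq_Q[simp]: "newP m e \<noteq> newQ m' e'"
  by (simp add: newP_def newQ_def)

lemma two_set_MinMax: "e = {a, b} \<Longrightarrow> e = {Min e, Max e}"
  by (auto simp: min_def max_def)

lemma P_inj: "newP m e = newP m' e' \<Longrightarrow> e = {a,b} \<Longrightarrow> e' = {c,d} \<Longrightarrow> e = e'"
proof -
  assume h: "newP m e = newP m' e'" "e = {a,b}" "e' = {c,d}"
  from h(1) have "Min e = Min e'" "Max e = Max e'" unfolding newP_def by simp_all
  with two_set_MinMax[OF h(2)] two_set_MinMax[OF h(3)] show ?thesis by simp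
qed
lemma Q_inj: "newQ m e = newQ m' e' \<Longrightarrow> e = {a,b} \<Longrightarrow> e' = {c,d} \<Longrightarrow> e = e'"
proof -
  assume h: "newQ m e = newQ m' e'" "e = {a,b}" "e' = {c,d}"
  from h(1) have "Min e = Min e'" "Max e = Max e'" unfolding newQ_def by simp_all
  with two_set_MinMax[OF h(2)] two_set_MinMax[OF h(3)] show ?thesis by simp
qed

primrec ED :: "nat \<Rightarrow> nat set set" where
  "ED 0 = {{vs, vt}}"
| "ED (Suc m) = (\<Union>e\<in>ED m. {{x, newP m e} | x. x \<in> e} \<union> {{x, newQ m e} | x. x \<in> e})"

primrec VD :: "nat \<Rightarrow> nat set" where
  "VD 0 = {vs, vt}"
| "VD (Suc m) = VD m \<union> newP m ` ED m \<union> newQ m ` ED m"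

primrec EW :: "nat \<Rightarrow> nat set set" where
  "EW 0 = ED 0"
| "EW (Suc m) = EW m \<union> ED (Suc m)"

lemma lev_VD: "v \<in> VD n \<Longrightarrow> lev v \<le> n"
  by (induction n arbitrary: v) (auto intro: le_SucI)

lemma ED_form: "e \<in> ED n \<Longrightarrow> \<exists>a b. e = {a, b} \<and> a \<noteq> b \<and> a \<in> VD n \<and> b \<in> VD n"
proof (induction n arbitrary: e)
  case 0 then show ?case by (intro exI[of _ vs] exI[of _ vt]) auto
next
  case (Suc m)
  then obtain e0 x where e0: "e0 \<in> ED m" "x \<in> e0" and "e = {x, newP m e0} \<or> e = {x, newQ m e0}"
    by auto
  moreover from Suc.IH[OF e0(1)] e0 have xV: "x \<in> VD m" by auto
  moreover from this have "lev x \<le> m" by (rule lev_VD)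
  hence "x \<noteq> newP m e0" "x \<noteq> newQ m e0" by (metis lev_P Suc_n_not_le_n, metis lev_Q Suc_n_not_le_n)
  moreover have "newP m e0 \<in> VD (Suc m)" "newQ m e0 \<in> VD (Suc m)" "x \<in> VD (Suc m)"
    using e0 xV by auto
  ultimately show ?case by blast
qed

lemma finite_ED: "finite (ED n)"
proof (induction n)
  case (Suc m)
  have "finite {{x, newP m e} | x. x \<in> e} \<and> finite {{x, newQ m e} | x. x \<in> e}" if "e \<in> ED m" for e
  proof -
    from ED_form[OF that] obtain a b where "e = {a,b}" by blast
    then show ?thesis by (auto simp: setcompr_eq_image)
  qed
  with Suc show ?case by auto
qed simp

lemma finite_VD: "finite (VD n)"
  by (induction n) (auto simp: finite_ED)

lemma VD_mono: "m \<le> n \<Longrightarrow> VD m \<subseteq> VD n"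
  by (induction n rule: dec_induct) auto
lemma EW_mono: "m \<le> n \<Longrightarrow> EW m \<subseteq> EW n"
  by (induction n rule: dec_induct) auto
lemma ED_EW: "ED n \<subseteq> EW n"
  by (cases n) auto

lemma EW_form: "e \<in> EW n \<Longrightarrow> \<exists>a b. e = {a, b} \<and> a \<noteq> b \<and> a \<in> VD n \<and> b \<in> VD n"
proof (induction n)
  case 0 then show ?case using ED_form[of e 0] by simp
next
  case (Suc m)
  show ?case
  proof (cases "e \<in> EW m")
    case True
    with Suc.IH obtain a b where "e = {a, b}" "a \<noteq> b" "a \<in> VD m" "b \<in> VD m" by blast
    moreover have "VD m \<subseteq> VD (Suc m)" by auto
    ultimately show ?thesis by blast
  next
    case False with Suc.prems have "e \<in> ED (Suc m)" by simp
    then show ?thesis by (rule ED_form)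
  qed
qed

lemma st_in: "vs \<in> VD n" "vt \<in> VD n" "{vs, vt} \<in> EW n"
  using VD_mono[of 0 n] EW_mono[of 0 n] by auto

lemma lev0: "v \<in> VD n \<Longrightarrow> lev v = 0 \<Longrightarrow> v = vs \<or> v = vt"
  by (induction n) auto

lemma par_props: "v \<in> VD n \<Longrightarrow> 1 \<le> lev v \<Longrightarrow>
   par v \<in> VD n \<and> lev (par v) < lev v \<and> {v, par v} \<in> EW n"
proof (induction n)
  case 0 then show ?case by auto
next
  case (Suc m)
  show ?case
  proof (cases "v \<in> VD m")
    case True
    with Suc have "par v \<in> VD m \<and> lev (par v) < lev v \<and> {v, par v} \<in> EW m" by blast
    moreover have "VD m \<subseteq> VD (Suc m)" "EW m \<subseteq> EW (Suc m)" by auto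
    ultimately show ?thesis by blast
  next
    case False
    with Suc.prems obtain e where e: "e \<in> ED m" and v: "v = newP m e \<or> v = newQ m e" by auto
    from ED_form[OF e] obtain a b where ab: "e = {a,b}" "a \<in> VD m" "b \<in> VD m" by blast
    have Me: "Min e \<in> e" using ab by auto
    hence "Min e \<in> VD m" using ab by auto
    hence lm: "lev (Min e) \<le> m" by (rule lev_VD)
    have "{v, Min e} \<in> ED (Suc m)" using e Me v by (auto simp: insert_commute)
    then show ?thesis using v \<open>Min e \<in> VD m\<close> lm by auto
  qed
qed

lemma diamond: "is_diamond n (VD n) (ED n)"
proof (induction n)
  case 0 then show ?case using is_diamond.zero[of vs vt] by simp
next
  case (Suc m)
  have ip: "inj_on (newP m) (ED m)"
    by (rule inj_onI) (metis ED_form P_inj)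
  have iq: "inj_on (newQ m) (ED m)"
    by (rule inj_onI) (metis ED_form Q_inj)
  have d1: "newP m ` ED m \<inter> VD m = {}" using lev_VD[of _ m] by fastforce
  have d2: "newQ m ` ED m \<inter> VD m = {}" using lev_VD[of _ m] by fastforce
  have d3: "newP m ` ED m \<inter> newQ m ` ED m = {}" by auto
  show ?case using is_diamond.suc[OF Suc ip iq d1 d2 d3] by simp
qed

definition newE :: "nat \<Rightarrow> nat set \<Rightarrow> nat set set" where
  "newE m e = {{x, newP m e} | x. x \<in> e} \<union> {{x, newQ m e} | x. x \<in> e}"

lemma ED_Suc': "ED (Suc m) = (\<Union>e\<in>ED m. newE m e)"
  by (simp add: newE_def)

lemma newE_ab: "newE m {a,b} = {{newP m {a,b}, a}, {newP m {a,b}, b}} \<union> {{newQ m {a,b}, a}, {newQ m {a,b}, b}}"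
  unfolding newE_def by (auto simp: insert_commute)

lemma sp_step_set:
  assumes sp: "sp_full (VD m) (EW m)"
  shows "finite F \<Longrightarrow> F \<subseteq> ED m \<Longrightarrow>
    sp_full (VD m \<union> newP m ` F \<union> newQ m ` F) (EW m \<union> (\<Union>e\<in>F. newE m e))"
proof (induction F rule: finite_induct)
  case empty then show ?case using sp by simp
next
  case (insert e F)
  define V' where "V' = VD m \<union> newP m ` F \<union> newQ m ` F"
  define E' where "E' = EW m \<union> (\<Union>e\<in>F. newE m e)"
  have IH: "sp_full V' E'" using insert unfolding V'_def E'_def by simp
  have eED: "e \<in> ED m" using insert by simp
  obtain a b where ab: "e = {a,b}" using ED_form[OF eED] by blast
  have "e \<in> EW m" using eED ED_EW by blast
  hence abE: "{a,b} \<in> E'" using ab unfolding E'_def by simp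
  have Pn: "newP m e \<notin> V'"
  proof
    assume "newP m e \<in> V'"
    moreover have "newP m e \<notin> VD m" using lev_VD[of "newP m e" m] by auto
    moreover have "newP m e \<notin> newP m ` F"
    proof
      assume "newP m e \<in> newP m ` F"
      then obtain e' where "e' \<in> F" "newP m e = newP m e'" by auto
      moreover have "e' \<in> ED m" using \<open>e' \<in> F\<close> insert by auto
      ultimately show False using P_inj ED_form ab insert(2) by metis
    qed
    ultimately show False unfolding V'_def by auto
  qed
  from sp_full.step[OF IH abE Pn]
  have s1: "sp_full (insert (newP m e) V') (E' \<union> {{newP m e, a}, {newP m e, b}})" .
  have abE2: "{a,b} \<in> E' \<union> {{newP m e, a}, {newP m e, b}}" using abE by simp
  have Qn: "newQ m e \<notin> insert (newP m e) V'"
  proof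
    assume "newQ m e \<in> insert (newP m e) V'"
    moreover have "newQ m e \<notin> VD m" using lev_VD[of "newQ m e" m] by auto
    moreover have "newQ m e \<notin> newQ m ` F"
    proof
      assume "newQ m e \<in> newQ m ` F"
      then obtain e' where "e' \<in> F" "newQ m e = newQ m e'" by auto
      moreover have "e' \<in> ED m" using \<open>e' \<in> F\<close> insert by auto
      ultimately show False using Q_inj ED_form ab insert(2) by metis
    qed
    moreover have "newQ m e \<notin> newP m ` F" by (auto simp del: P_neq_Q simp add: P_neq_Q[symmetric])
    ultimately show False unfolding V'_def by (auto simp del: P_neq_Q simp add: P_neq_Q[symmetric])
  qed
  from sp_full.step[OF s1 abE2 Qn]
  have s2: "sp_full (insert (newQ m e) (insert (newP m e) V'))
     (E' \<union> {{newP m e, a}, {newP m e, b}} \<union> {{newQ m e, a}, {newQ m e, b}})" .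
  have eqV: "insert (newQ m e) (insert (newP m e) V') = VD m \<union> newP m ` insert e F \<union> newQ m ` insert e F"
    unfolding V'_def by auto
  have eqE: "E' \<union> {{newP m e, a}, {newP m e, b}} \<union> {{newQ m e, a}, {newQ m e, b}}
     = EW m \<union> (\<Union>e\<in>insert e F. newE m e)"
    unfolding E'_def using newE_ab[of m a b] ab by auto
  show ?case using s2 unfolding eqV eqE .
qed

lemma sp_VD: "sp_full (VD n) (EW n)"
proof (induction n)
  case 0 then show ?case using sp_full.base[of vs vt] by simp
next
  case (Suc m)
  from sp_step_set[OF Suc finite_ED order_refl]
  show ?case by (simp add: ED_Suc' newE_def)
qed

function proj :: "nat \<Rightarrow> nat \<Rightarrow> nat" where
  "proj k v = (if lev v \<le> k \<or> lev v \<le> lev (par v) then v else proj k (par v))"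
  by auto
termination by (relation "measure (\<lambda>(k,v). lev v)") auto

declare proj.simps[simp del]

lemma proj_unfold: "v \<in> VD n \<Longrightarrow> proj k v = (if lev v \<le> k then v else proj k (par v))"
proof (cases "lev v \<le> k")
  case False
  assume v: "v \<in> VD n"
  from False have "1 \<le> lev v" by simp
  from par_props[OF v this] have "lev (par v) < lev v" by simp
  then show ?thesis using False by (subst proj.simps) simp
qed (subst proj.simps, simp)

lemma proj_in: "v \<in> VD n \<Longrightarrow> proj k v \<in> VD n \<and> lev (proj k v) \<le> k"
proof (induction "lev v" arbitrary: v rule: less_induct)
  case less
  show ?case
  proof (cases "lev v \<le> k")
    case True then show ?thesis using less.prems proj_unfold[OF less.prems] by simp
  next
    case False
    hence "1 \<le> lev v" by simp
    from par_props[OF less.prems this] have p: "par v \<in> VD n" "lev (par v) < lev v" by auto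
    from less.hyps[OF p(2) p(1)] show ?thesis using False proj_unfold[OF less.prems] by simp
  qed
qed

lemma proj_id: "v \<in> VD n \<Longrightarrow> lev v \<le> k \<Longrightarrow> proj k v = v"
  using proj_unfold by simp

lemma proj_par: "v \<in> VD n \<Longrightarrow> j < lev v \<Longrightarrow> proj j v = proj j (par v)"
  using proj_unfold[of v n j] by simp

lemma proj_proj: "v \<in> VD n \<Longrightarrow> j \<le> k \<Longrightarrow> proj j (proj k v) = proj j v"
proof (induction "lev v" arbitrary: v rule: less_induct)
  case less
  show ?case
  proof (cases "lev v \<le> k")
    case True then show ?thesis using proj_id[OF less.prems(1)] by simp
  next
    case False
    hence "1 \<le> lev v" by simp
    from par_props[OF less.prems(1) this] have p: "par v \<in> VD n" "lev (par v) < lev v" by auto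
    have "proj k v = proj k (par v)" using proj_par[OF less.prems(1)] False by simp
    moreover have "proj j v = proj j (par v)" using proj_par[OF less.prems(1)] False less.prems(2) by simp
    ultimately show ?thesis using less.hyps[OF p(2) p(1) less.prems(2)] by simp
  qed
qed

definition fd :: "nat \<Rightarrow> nat \<Rightarrow> nat" where "fd x y = (LEAST k. proj k x \<noteq> proj k y)"

definition wt :: "nat set \<Rightarrow> real" where
  "wt e = (1/2) ^ (LEAST k. \<exists>a\<in>e. \<exists>b\<in>e. proj k a \<noteq> proj k b)"

lemma wt_ab: "wt {a,b} = (1/2) ^ fd a b"
proof -
  have "\<And>k. (\<exists>a'\<in>{a,b}. \<exists>b'\<in>{a,b}. proj k a' \<noteq> proj k b') \<longleftrightarrow> proj k a \<noteq> proj k b" by auto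
  then show ?thesis unfolding wt_def fd_def by simp
qed

lemma wt_pos: "wt e > 0" unfolding wt_def by simp

lemma wt_le1: "wt e \<le> 1" unfolding wt_def by (simp add: power_le_one)

lemma wt_lower: "proj j a \<noteq> proj j b \<Longrightarrow> wt {a,b} \<ge> (1/2) ^ j"
  unfolding wt_ab fd_def by (rule power_decreasing) (auto intro: Least_le)

lemma fd_par: assumes v: "v \<in> VD n" and l: "1 \<le> lev v" shows "fd v (par v) = lev v"
proof -
  from par_props[OF v l] have p: "par v \<in> VD n" "lev (par v) < lev v" by auto
  have "proj (lev v) v = v" using proj_id[OF v] by simp
  moreover have "proj (lev v) (par v) = par v" using proj_id[OF p(1)] p(2) by simp
  moreover have "v \<noteq> par v" using p(2) by auto
  ultimately have ex: "proj (lev v) v \<noteq> proj (lev v) (par v)" by simp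
  show ?thesis unfolding fd_def
  proof (rule Least_equality)
    show "proj (lev v) v \<noteq> proj (lev v) (par v)" by (rule ex)
  next
    fix y assume "proj y v \<noteq> proj y (par v)"
    then show "lev v \<le> y" using proj_par[OF v] by (metis not_le)
  qed
qed

lemma wt_par: "v \<in> VD n \<Longrightarrow> 1 \<le> lev v \<Longrightarrow> wt {v, par v} = (1/2) ^ lev v"
  using fd_par wt_ab by simp

lemma walk_single[simp]: "walk E a a [a]" "walk_len w [a] = 0"
  unfolding walk_def walk_len_def by auto

lemma walk_Cons: "ys \<noteq> [] \<Longrightarrow> walk E a c (a # ys) \<longleftrightarrow> {a, hd ys} \<in> E \<and> walk E (hd ys) c ys"
proof -
  assume ys: "ys \<noteq> []"
  then obtain L where L: "length ys = Suc L" by (cases ys) auto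
  have "(\<forall>i < length (a#ys) - 1. {(a#ys) ! i, (a#ys) ! Suc i} \<in> E) \<longleftrightarrow>
        {a, ys ! 0} \<in> E \<and> (\<forall>i < length ys - 1. {ys ! i, ys ! Suc i} \<in> E)"
    using L by (auto simp: less_Suc_eq_0_disj)
  then show ?thesis using ys unfolding walk_def by (auto simp: hd_conv_nth)
qed

lemma walk_len_Cons: "ys \<noteq> [] \<Longrightarrow> walk_len w (a # ys) = w {a, hd ys} + walk_len w ys"
proof -
  assume ys: "ys \<noteq> []"
  then obtain L where L: "length ys = Suc L" by (cases ys) auto
  show ?thesis unfolding walk_len_def using L ys
    by (simp add: sum.lessThan_Suc_shift hd_conv_nth del: sum.lessThan_Suc)
qed

lemma walk_append: "walk E a b xs \<Longrightarrow> walk E b c ys \<Longrightarrow>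
   walk E a c (xs @ tl ys) \<and> walk_len w (xs @ tl ys) = walk_len w xs + walk_len w ys"
proof (induction xs arbitrary: a)
  case Nil then show ?case by (simp add: walk_def)
next
  case (Cons x xs)
  have xa: "x = a" using Cons.prems by (simp add: walk_def)
  show ?case
  proof (cases xs)
    case Nil
    with Cons.prems xa have ab: "a = b" by (simp add: walk_def)
    moreover have "ys \<noteq> []" "hd ys = b" using Cons.prems by (auto simp: walk_def)
    ultimately have "x # xs @ tl ys = ys" using Nil xa by (cases ys) auto
    then show ?thesis using Nil Cons.prems xa ab by simp
  next
    case (Cons x' xs')
    hence ne: "xs \<noteq> []" by simp
    from Cons.prems(1) xa walk_Cons[OF ne] have e: "{a, hd xs} \<in> E" and w: "walk E (hd xs) b xs" by auto
    from Cons.IH[OF w Cons.prems(2)] have ih: "walk E (hd xs) c (xs @ tl ys)"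
      "walk_len w (xs @ tl ys) = walk_len w xs + walk_len w ys" by auto
    have ne2: "xs @ tl ys \<noteq> []" "hd (xs @ tl ys) = hd xs" using ne by auto
    show ?thesis using walk_Cons[OF ne2(1), of E a c] walk_len_Cons[OF ne2(1), of w a]
      walk_len_Cons[OF ne, of w a] ih e xa ne2(2) by simp
  qed
qed

lemma walk_rev: "walk E a b xs \<Longrightarrow> walk E b a (rev xs) \<and> walk_len w (rev xs) = walk_len w xs"
proof (induction xs arbitrary: a)
  case Nil then show ?case by (simp add: walk_def)
next
  case (Cons x xs)
  have xa: "x = a" using Cons.prems by (simp add: walk_def)
  show ?case
  proof (cases xs)
    case Nil
    with Cons.prems xa show ?thesis by (simp add: walk_def)
  next
    case (Cons x' xs')
    hence ne: "xs \<noteq> []" by simp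
    from Cons.prems(1) xa walk_Cons[OF ne] have e: "{a, hd xs} \<in> E" and w: "walk E (hd xs) b xs" by auto
    from Cons.IH[OF w] have ih: "walk E b (hd xs) (rev xs)" "walk_len w (rev xs) = walk_len w xs" by auto
    have w2: "walk E (hd xs) a [hd xs, a]" using walk_Cons[of "[a]" E "hd xs" a] e by (simp add: insert_commute)
    have l2: "walk_len w [hd xs, a] = w {a, hd xs}" using walk_len_Cons[of "[a]" w "hd xs"] by (simp add: insert_commute)
    from walk_append[OF ih(1) w2, of w] have "walk E b a (rev xs @ [a])"
      "walk_len w (rev xs @ [a]) = walk_len w (rev xs) + walk_len w [hd xs, a]" by auto
    then show ?thesis using ih(2) l2 xa walk_len_Cons[OF ne, of w a] by simp
  qed
qed

lemma walk_to_proj: "v \<in> VD n \<Longrightarrow>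
  \<exists>xs. walk (EW n) v (proj k v) xs \<and> walk_len wt xs \<le> (1/2)^k - (1/2)^(max k (lev v))"
proof (induction "lev v" arbitrary: v rule: less_induct)
  case less
  show ?case
  proof (cases "lev v \<le> k")
    case True
    then show ?thesis using proj_id[OF less.prems True] by (intro exI[of _ "[v]"]) (simp add: max_def)
  next
    case False
    hence l1: "1 \<le> lev v" by simp
    from par_props[OF less.prems this] have p: "par v \<in> VD n" "lev (par v) < lev v" "{v, par v} \<in> EW n" by auto
    from less.hyps[OF p(2) p(1)] obtain ys where ys: "walk (EW n) (par v) (proj k (par v)) ys"
      "walk_len wt ys \<le> (1/2)^k - (1/2)^(max k (lev (par v)))" by blast
    have ne: "ys \<noteq> []" "hd ys = par v" using ys(1) by (auto simp: walk_def)
    have pk: "proj k v = proj k (par v)" using proj_par[OF less.prems] False by simp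
    have w: "walk (EW n) v (proj k v) (v # ys)" using walk_Cons[OF ne(1)] ne(2) p(3) ys(1) pk by simp
    have len: "walk_len wt (v # ys) = (1/2)^lev v + walk_len wt ys"
      using walk_len_Cons[OF ne(1)] ne(2) wt_par[OF less.prems l1] by simp
    obtain L where L: "lev v = Suc L" using l1 by (cases "lev v") auto
    have "max k (lev (par v)) \<le> L" using False p(2) L by simp
    hence f1: "(1/2::real)^L \<le> (1/2)^(max k (lev (par v)))" by (rule power_decreasing) auto
    have f2: "(1/2::real)^(lev v) = (1/2)^L / 2" using L by simp
    have f3: "max k (lev v) = lev v" using False by simp
    have "walk_len wt (v # ys) \<le> (1/2)^k - (1/2)^(max k (lev v))"
      unfolding f3 using len ys(2) f1 f2 by linarith
    then show ?thesis using w by blast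
  qed
qed

lemma walk_len_nonneg: "walk_len wt xs \<ge> 0"
  unfolding walk_len_def by (rule sum_nonneg) (simp add: less_imp_le wt_pos)

lemma spdist_le: "walk E u v xs \<Longrightarrow> spdist E wt u v \<le> walk_len wt xs"
  unfolding spdist_def
  by (rule cInf_lower) (auto intro: bdd_belowI[of _ 0] walk_len_nonneg)

lemma spdist_ge: "\<exists>xs. walk E u v xs \<Longrightarrow> (\<And>xs. walk E u v xs \<Longrightarrow> c \<le> walk_len wt xs) \<Longrightarrow>
  c \<le> spdist E wt u v"
  unfolding spdist_def by (rule cInf_greatest) auto

lemma fd_prop: assumes "x \<in> VD n" "y \<in> VD n" "x \<noteq> y"
  shows "proj (fd x y) x \<noteq> proj (fd x y) y" "fd x y \<le> n" "\<And>i. i < fd x y \<Longrightarrow> proj i x = proj i y"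
proof -
  have ex: "proj n x \<noteq> proj n y" using proj_id[OF assms(1) lev_VD[OF assms(1)]]
    proj_id[OF assms(2) lev_VD[OF assms(2)]] assms(3) by simp
  show "proj (fd x y) x \<noteq> proj (fd x y) y" unfolding fd_def by (rule LeastI[of "\<lambda>k. proj k x \<noteq> proj k y", OF ex])
  show "fd x y \<le> n" unfolding fd_def by (rule Least_le[of "\<lambda>k. proj k x \<noteq> proj k y", OF ex])
  show "\<And>i. i < fd x y \<Longrightarrow> proj i x = proj i y" unfolding fd_def using not_less_Least by blast
qed

lemma upper_walk: assumes x: "x \<in> VD n" and y: "y \<in> VD n" and xy: "x \<noteq> y"
  shows "\<exists>xs. walk (EW n) x y xs \<and> walk_len wt xs \<le> 4 * (1/2)^(fd x y)"
proof (cases "fd x y")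
  case 0
  define a where "a = proj 0 x"
  define b where "b = proj 0 y"
  have ab: "a \<noteq> b" using fd_prop(1)[OF x y xy] 0 a_def b_def by simp
  have ain: "a \<in> VD n" "lev a = 0" using proj_in[OF x, of 0] a_def by auto
  have bin: "b \<in> VD n" "lev b = 0" using proj_in[OF y, of 0] b_def by auto
  have "{a,b} = {vs,vt}" using lev0[OF ain] lev0[OF bin] ab by auto
  hence abE: "{a,b} \<in> EW n" using st_in by simp
  obtain A where A0: "walk (EW n) x a A" "walk_len wt A \<le> (1/2)^0 - (1/2)^(max 0 (lev x))"
    using walk_to_proj[OF x, of 0] a_def by blast
  have A: "walk (EW n) x a A" "walk_len wt A \<le> 1" using A0 by (auto intro: order.trans[OF A0(2)])
  obtain C where C0: "walk (EW n) y b C" "walk_len wt C \<le> (1/2)^0 - (1/2)^(max 0 (lev y))"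
    using walk_to_proj[OF y, of 0] b_def by blast
  have C: "walk (EW n) y b C" "walk_len wt C \<le> 1" using C0 by (auto intro: order.trans[OF C0(2)])
  have B: "walk (EW n) a b [a,b]" "walk_len wt [a,b] \<le> 1"
    using walk_Cons[of "[b]" "EW n" a b] walk_len_Cons[of "[b]" wt a] abE wt_le1[of "{a,b}"] by auto
  from walk_rev[OF C(1), of wt] have C': "walk (EW n) b y (rev C)" "walk_len wt (rev C) \<le> 1" using C(2) by auto
  from walk_append[OF A(1) B(1), of wt] have AB: "walk (EW n) x b (A @ tl [a,b])"
    "walk_len wt (A @ tl [a,b]) \<le> 2" using A(2) B(2) by auto
  from walk_append[OF AB(1) C'(1), of wt] AB(2) C'(2)
  show ?thesis using 0 by (intro exI[of _ "(A @ tl [a,b]) @ tl (rev C)"]) auto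
next
  case (Suc i)
  have eq: "proj i x = proj i y" using fd_prop(3)[OF x y xy] Suc by simp
  obtain A where A0: "walk (EW n) x (proj i x) A" "walk_len wt A \<le> (1/2)^i - (1/2)^(max i (lev x))"
    using walk_to_proj[OF x, of i] by blast
  have A: "walk (EW n) x (proj i x) A" "walk_len wt A \<le> (1/2)^i" using A0
    by (auto intro: order.trans[OF A0(2)])
  obtain C where C0: "walk (EW n) y (proj i x) C" "walk_len wt C \<le> (1/2)^i - (1/2)^(max i (lev y))"
    using walk_to_proj[OF y, of i] eq by auto
  have C: "walk (EW n) y (proj i x) C" "walk_len wt C \<le> (1/2)^i" using C0
    by (auto intro: order.trans[OF C0(2)])
  from walk_rev[OF C(1), of wt] have C': "walk (EW n) (proj i x) y (rev C)" "walk_len wt (rev C) \<le> (1/2)^i" using C(2) by auto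
  from walk_append[OF A(1) C'(1), of wt] A(2) C'(2)
  show ?thesis using Suc by (intro exI[of _ "A @ tl (rev C)"]) auto
qed

lemma lower_walk: assumes w: "walk E x y xs" and d: "proj j x \<noteq> proj j y"
  shows "(1/2)^j \<le> walk_len wt xs"
proof -
  have "\<exists>i < length xs - 1. proj j (xs ! i) \<noteq> proj j (xs ! Suc i)"
  proof (rule ccontr)
    assume "\<not> ?thesis"
    hence h: "\<forall>i < length xs - 1. proj j (xs ! i) = proj j (xs ! Suc i)" by auto
    have "\<forall>i < length xs. proj j (xs ! i) = proj j (xs ! 0)"
    proof (intro allI impI)
      fix i assume "i < length xs"
      then show "proj j (xs ! i) = proj j (xs ! 0)"
        by (induction i) (use h in auto)
    qed
    moreover have "xs ! 0 = x" "xs ! (length xs - 1) = y" "xs \<noteq> []"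
      using w by (auto simp: walk_def hd_conv_nth last_conv_nth)
    ultimately show False using d by (metis diff_less length_greater_0_conv less_one)
  qed
  then obtain i where i: "i < length xs - 1" "proj j (xs ! i) \<noteq> proj j (xs ! Suc i)" by blast
  have "(1/2)^j \<le> wt {xs ! i, xs ! Suc i}" using wt_lower[OF i(2)] .
  also have "\<dots> \<le> walk_len wt xs" unfolding walk_len_def
    by (rule member_le_sum[where f="\<lambda>i. wt {xs ! i, xs ! Suc i}"]) (use i in \<open>auto simp: less_imp_le wt_pos\<close>)
  finally show ?thesis .
qed

lemma dist_bounds: assumes x: "x \<in> VD n" and y: "y \<in> VD n" and xy: "x \<noteq> y"
  shows "(1/2)^(fd x y) \<le> spdist (EW n) wt x y" "spdist (EW n) wt x y \<le> 4 * (1/2)^(fd x y)"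
proof -
  obtain xs where xs: "walk (EW n) x y xs" "walk_len wt xs \<le> 4 * (1/2)^(fd x y)"
    using upper_walk[OF assms] by blast
  show "spdist (EW n) wt x y \<le> 4 * (1/2)^(fd x y)" using spdist_le[OF xs(1)] xs(2) by simp
  show "(1/2)^(fd x y) \<le> spdist (EW n) wt x y"
    by (rule spdist_ge) (use xs(1) lower_walk fd_prop(1)[OF assms] in auto)
qed

definition emb :: "nat \<Rightarrow> nat \<Rightarrow> nat \<Rightarrow> real" where
  "emb n x i = (if fst (prod_decode i) \<le> n \<and> snd (prod_decode i) = proj (fst (prod_decode i)) x
     then (1/2) ^ fst (prod_decode i) else 0)"

definition supp :: "nat \<Rightarrow> nat \<Rightarrow> nat set" where
  "supp n x = (\<lambda>k. prod_encode (k, proj k x)) ` {..n}"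

lemma finite_supp: "finite (supp n x)" unfolding supp_def by simp

lemma emb_supp: "i \<notin> supp n x \<Longrightarrow> emb n x i = 0"
proof -
  assume i: "i \<notin> supp n x"
  obtain k v where kv: "prod_decode i = (k, v)" by fastforce
  have "i = prod_encode (k, v)" using kv by (metis prod_decode_inverse)
  then show ?thesis using i kv unfolding emb_def supp_def by auto
qed

lemma emb_nonneg: "emb n x i \<ge> 0" unfolding emb_def by simp

lemma emb_at: "k \<le> n \<Longrightarrow> emb n x (prod_encode (k, proj k x)) = (1/2)^k"
  unfolding emb_def by simp

lemma emb_at0: "proj k y \<noteq> v \<Longrightarrow> emb n y (prod_encode (k, v)) = 0"
  unfolding emb_def by auto

lemma emb_ell2: "emb n x \<in> ell2"
  unfolding ell2_def
  by (auto intro!: summable_finite[OF finite_supp[of n x]] simp: emb_supp)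

lemma geo: "(\<Sum>k\<in>{..n}. (if j \<le> k then (1/4::real)^k else 0)) \<le> 4/3 * ((1/4)^j - (1/4)^(max j (Suc n)))"
proof (induction n)
  case 0 then show ?case by (cases j) auto
next
  case (Suc n)
  show ?case
  proof (cases "j \<le> Suc n")
    case True
    have m: "max j (Suc n) = Suc n" "max j (Suc (Suc n)) = Suc (Suc n)" using True by auto
    have "(\<Sum>k\<in>{..Suc n}. (if j \<le> k then (1/4::real)^k else 0))
        = (\<Sum>k\<in>{..n}. (if j \<le> k then (1/4::real)^k else 0)) + (1/4)^(Suc n)" using True by simp
    also have "\<dots> \<le> 4/3 * ((1/4)^j - (1/4)^(Suc n)) + (1/4)^(Suc n)" using Suc m by simp
    also have "\<dots> = 4/3 * ((1/4)^j - (1/4)^(Suc (Suc n)))" by (simp add: field_simps)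
    finally show ?thesis using m by simp
  next
    case False
    then have m: "max j (Suc n) = j" "max j (Suc (Suc n)) = j" by auto
    show ?thesis using Suc False m by simp
  qed
qed

lemma sum_h: assumes "supp n x \<subseteq> N" "finite N"
  shows "(\<Sum>i\<in>N. (if j \<le> fst (prod_decode i) then (emb n x i)^2 else 0)) \<le> 4/3 * (1/4)^j"
proof -
  let ?h = "\<lambda>i. (if j \<le> fst (prod_decode i) then (emb n x i)^2 else 0)"
  have "(\<Sum>i\<in>N. ?h i) = (\<Sum>i\<in>supp n x. ?h i)"
    by (rule sum.mono_neutral_right) (use assms emb_supp in auto)
  also have "\<dots> = (\<Sum>k\<in>{..n}. ?h (prod_encode (k, proj k x)))"
    unfolding supp_def by (simp add: sum.reindex inj_on_def)
  also have "\<dots> = (\<Sum>k\<in>{..n}. (if j \<le> k then (1/4::real)^k else 0))"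
    by (rule sum.cong) (auto simp: emb_at power_mult_distrib[symmetric] power_mult[symmetric]
       power2_eq_square power_mult_distrib)
  also have "\<dots> \<le> 4/3 * ((1/4)^j - (1/4)^(max j (Suc n)))" by (rule geo)
  also have "\<dots> \<le> 4/3 * (1/4)^j" by simp
  finally show ?thesis .
qed

lemma l2_bounds: assumes x: "x \<in> VD n" and y: "y \<in> VD n" and xy: "x \<noteq> y"
  shows "(1/2)^(fd x y) \<le> ell2_dist (emb n x) (emb n y)" "ell2_dist (emb n x) (emb n y) \<le> 2 * (1/2)^(fd x y)"
proof -
  define j where "j = fd x y"
  define N where "N = supp n x \<union> supp n y"
  have fN: "finite N" unfolding N_def by (simp add: finite_supp)
  let ?t = "\<lambda>i. (emb n x i - emb n y i)^2"
  have D: "(\<Sum>i. ?t i) = (\<Sum>i\<in>N. ?t i)"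
    by (rule suminf_finite[OF fN]) (auto simp: N_def emb_supp)
  have jn: "j \<le> n" and dj: "proj j x \<noteq> proj j y" using fd_prop[OF x y xy] j_def by auto
  define i0 where "i0 = prod_encode (j, proj j x)"
  have i0N: "i0 \<in> N" unfolding N_def supp_def i0_def using jn by auto
  have e0: "?t i0 = ((1/2)^j)^2" unfolding i0_def using emb_at[OF jn, of x] emb_at0[of j y "proj j x" n] dj by simp
  have "?t i0 \<le> (\<Sum>i\<in>N. ?t i)" by (rule member_le_sum) (use i0N fN in auto)
  hence lo: "((1/2)^j)^2 \<le> (\<Sum>i. ?t i)" using D e0 by simp
  show "(1/2)^(fd x y) \<le> ell2_dist (emb n x) (emb n y)"
    unfolding ell2_dist_def j_def[symmetric] using real_le_rsqrt[OF lo] by simp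
  let ?hx = "\<lambda>i. (if j \<le> fst (prod_decode i) then (emb n x i)^2 else 0)"
  let ?hy = "\<lambda>i. (if j \<le> fst (prod_decode i) then (emb n y i)^2 else 0)"
  have tb: "?t i \<le> ?hx i + ?hy i" for i
  proof (cases "j \<le> fst (prod_decode i)")
    case True
    have "0 \<le> emb n x i * emb n y i" using emb_nonneg by simp
    then show ?thesis using True by (simp add: power2_diff)
  next
    case False
    hence "proj (fst (prod_decode i)) x = proj (fst (prod_decode i)) y"
      using fd_prop(3)[OF x y xy] j_def by simp
    hence "emb n x i = emb n y i" unfolding emb_def by simp
    then show ?thesis using False by simp
  qed
  have "(\<Sum>i\<in>N. ?t i) \<le> (\<Sum>i\<in>N. ?hx i + ?hy i)" by (rule sum_mono) (rule tb)
  also have "\<dots> = (\<Sum>i\<in>N. ?hx i) + (\<Sum>i\<in>N. ?hy i)" by (rule sum.distrib)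
  also have "\<dots> \<le> 4/3 * (1/4)^j + 4/3 * (1/4)^j"
    using sum_h[of n x N j] sum_h[of n y N j] fN unfolding N_def by (intro add_mono) auto
  finally have s1: "(\<Sum>i. ?t i) \<le> 4/3 * (1/4)^j + 4/3 * (1/4)^j" using D by simp
  have s2: "(2 * (1/2::real)^j)^2 = 4 * (1/4)^j"
    by (simp add: power_mult_distrib power2_eq_square power_mult_distrib[symmetric])
  have s3: "(0::real) \<le> (1/4)^j" by simp
  have "(\<Sum>i. ?t i) \<le> (2 * (1/2)^j)^2" unfolding s2 using s1 s3 by linarith
  hence "sqrt (\<Sum>i. ?t i) \<le> sqrt ((2 * (1/2)^j)^2)" by (rule real_sqrt_le_mono)
  also have "sqrt ((2 * (1/2::real)^j)^2) = 2 * (1/2)^j" by (rule real_sqrt_unique) auto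
  finally show "ell2_dist (emb n x) (emb n y) \<le> 2 * (1/2)^(fd x y)"
    unfolding ell2_dist_def j_def[symmetric] .
qed

lemma ratios: assumes x: "x \<in> VD n" and y: "y \<in> VD n" and xy: "x \<noteq> y"
  shows "ell2_dist (emb n x) (emb n y) / spdist (EW n) wt x y \<le> 2"
    "0 \<le> ell2_dist (emb n x) (emb n y) / spdist (EW n) wt x y"
    "spdist (EW n) wt x y / ell2_dist (emb n x) (emb n y) \<le> 4"
    "0 \<le> spdist (EW n) wt x y / ell2_dist (emb n x) (emb n y)"
    "emb n x \<noteq> emb n y"
proof -
  define a :: real where "a = (1/2)^(fd x y)"
  have a: "0 < a" unfolding a_def by simp
  note d = dist_bounds[OF assms, folded a_def]
  note l = l2_bounds[OF assms, folded a_def]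
  show "ell2_dist (emb n x) (emb n y) / spdist (EW n) wt x y \<le> 2"
    using d l a by (simp add: divide_le_eq)
  show "spdist (EW n) wt x y / ell2_dist (emb n x) (emb n y) \<le> 4"
    using d l a by (simp add: divide_le_eq)
  show "0 \<le> ell2_dist (emb n x) (emb n y) / spdist (EW n) wt x y"
    using d l a by simp
  show "0 \<le> spdist (EW n) wt x y / ell2_dist (emb n x) (emb n y)"
    using d l a by simp
  show "emb n x \<noteq> emb n y"
  proof
    assume "emb n x = emb n y"
    hence "ell2_dist (emb n x) (emb n y) = 0" unfolding ell2_dist_def by simp
    then show False using l a by simp
  qed
qed

lemma sets_props:
  "lip_set (spdist (EW n) wt) (VD n) ell2_dist (emb n) \<noteq> {}"
  "lipinv_set (spdist (EW n) wt) (VD n) ell2_dist (emb n) \<noteq> {}"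
  "\<forall>r\<in>lip_set (spdist (EW n) wt) (VD n) ell2_dist (emb n). 0 \<le> r \<and> r \<le> 2"
  "\<forall>r\<in>lipinv_set (spdist (EW n) wt) (VD n) ell2_dist (emb n). 0 \<le> r \<and> r \<le> 4"
  using st_in[of n] vs_vt ratios unfolding lip_set_def lipinv_set_def by blast+

lemma Lip_bounds:
  "0 \<le> Lip (spdist (EW n) wt) (VD n) ell2_dist (emb n)"
  "Lip (spdist (EW n) wt) (VD n) ell2_dist (emb n) \<le> 2"
  "0 \<le> Lip_inv (spdist (EW n) wt) (VD n) ell2_dist (emb n)"
  "Lip_inv (spdist (EW n) wt) (VD n) ell2_dist (emb n) \<le> 4"
  "bdd_above (lip_set (spdist (EW n) wt) (VD n) ell2_dist (emb n))"
  "bdd_above (lipinv_set (spdist (EW n) wt) (VD n) ell2_dist (emb n))"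
proof -
  note sp = sets_props[of n]
  show b1: "bdd_above (lip_set (spdist (EW n) wt) (VD n) ell2_dist (emb n))"
    using sp(3) by (auto intro: bdd_aboveI)
  show b2: "bdd_above (lipinv_set (spdist (EW n) wt) (VD n) ell2_dist (emb n))"
    using sp(4) by (auto intro: bdd_aboveI)
  show "Lip (spdist (EW n) wt) (VD n) ell2_dist (emb n) \<le> 2"
    unfolding Lip_def using sp(1,3) by (auto intro: cSup_least)
  show "Lip_inv (spdist (EW n) wt) (VD n) ell2_dist (emb n) \<le> 4"
    unfolding Lip_inv_def using sp(2,4) by (auto intro: cSup_least)
  obtain r where r: "r \<in> lip_set (spdist (EW n) wt) (VD n) ell2_dist (emb n)" using sp(1) by blast
  show "0 \<le> Lip (spdist (EW n) wt) (VD n) ell2_dist (emb n)"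
    unfolding Lip_def using r sp(3) b1 by (meson cSup_upper2)
  obtain r' where r': "r' \<in> lipinv_set (spdist (EW n) wt) (VD n) ell2_dist (emb n)" using sp(2) by blast
  show "0 \<le> Lip_inv (spdist (EW n) wt) (VD n) ell2_dist (emb n)"
    unfolding Lip_inv_def using r' sp(4) b2 by (meson cSup_upper2)
qed

theorem theoremT:
  shows "\<exists>(V :: nat \<Rightarrow> nat set) (E :: nat \<Rightarrow> nat set set) (w :: nat \<Rightarrow> nat set \<Rightarrow> real).
    (\<forall>n\<ge>1. series_parallel (V n) (E n) (w n) \<and> connected_graph (V n) (E n) \<and>
            contains_diamond n (V n) (E n)) \<and>
    (\<exists>C :: real. \<exists>f :: nat \<Rightarrow> nat \<Rightarrow> (nat \<Rightarrow> real). \<forall>n\<ge>1.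
        (\<forall>u\<in>V n. f n u \<in> ell2) \<and>
        bilipschitz (spdist (E n) (w n)) (V n) ell2_dist (f n) \<and>
        distortion (spdist (E n) (w n)) (V n) ell2_dist (f n) \<le> C)"
proof -
  have A: "series_parallel (VD n) (EW n) wt \<and> connected_graph (VD n) (EW n) \<and> contains_diamond n (VD n) (EW n)" for n
  proof (intro conjI)
    show "series_parallel (VD n) (EW n) wt"
      unfolding series_parallel_def wgraph_def
      using finite_VD EW_form wt_pos sp_VD by blast
    show "connected_graph (VD n) (EW n)"
      unfolding connected_graph_def
    proof (intro ballI)
      fix u v assume uv: "u \<in> VD n" "v \<in> VD n"
      show "\<exists>xs. walk (EW n) u v xs"
      proof (cases "u = v")
        case True then show ?thesis using walk_single(1)[of "EW n" u] by blast
      next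
        case False then show ?thesis using upper_walk[OF uv False] by blast
      qed
    qed
    show "contains_diamond n (VD n) (EW n)"
      unfolding contains_diamond_def using diamond ED_EW by blast
  qed
  have B: "(\<forall>u\<in>VD n. emb n u \<in> ell2) \<and> bilipschitz (spdist (EW n) wt) (VD n) ell2_dist (emb n) \<and>
     distortion (spdist (EW n) wt) (VD n) ell2_dist (emb n) \<le> 8" for n
  proof (intro conjI)
    note L = Lip_bounds[of n]
    show "\<forall>u\<in>VD n. emb n u \<in> ell2" using emb_ell2 by blast
    show "bilipschitz (spdist (EW n) wt) (VD n) ell2_dist (emb n)"
      unfolding bilipschitz_def using L(5,6) ratios(5) by (auto intro: inj_onI)
    show "distortion (spdist (EW n) wt) (VD n) ell2_dist (emb n) \<le> 8"
      unfolding distortion_def using mult_mono[OF L(2) L(4)] L(1,3) by simp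
  qed
  show ?thesis
    apply (rule exI[of _ VD], rule exI[of _ EW], rule exI[of _ "\<lambda>_. wt"])
    apply (rule conjI)
     apply (simp add: A)
    apply (rule exI[of _ 8], rule exI[of _ emb])
    apply (simp add: B)
    done
qed

end
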